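(* Let $N_{\rm q}\ge1$ and $N\ge 2$ be integers, let $\rho$ be an $N_{\rm q}$-qubit density matrix with eigenvalues $\lambda_1\ge\lambda_2\ge\dots\ge\lambda_{2^{N_{\rm q}}}\ge 0$, and let $\tilde{\boldsymbol\lambda}=[\lambda_2,\dots,\lambda_{2^{N_{\rm q}}}]^{\rm T}$. For a function $g$ write $\mathbb{E}\{g(\lambda)\}=\frac{1}{2^{N_{\rm q}}-1}\sum_{i=2}^{2^{N_{\rm q}}}g(\lambda_i)$, let $\mu=\mathbb{E}\{\lambda\}$ and assume $\mu>0$. Define the relative noise bandwidth $b(\tilde{\boldsymbol\lambda})=\mu^{-1}\sqrt{\mathbb{E}\{|\lambda-\mu|^2\}}$. For $\boldsymbol\beta\in\mathbb{R}^{N-1}$ let $\tilde\epsilon(\boldsymbol\beta)=\mathbb{E}\{|\lambda\prod_{n=1}^{N-1}(\lambda-\beta_n)|\}$ and define the error ratio $R(\boldsymbol\beta)=\tilde\epsilon(\boldsymbol\beta)/\tilde\epsilon(\mathbf 0)$. Let $\boldsymbol\beta=\mu\mathbf 1_{N-1}$ (the $N$-th order Type-1 permutation filter). Then $$R(\boldsymbol\beta)\le\frac{1}{\mu}\Big[b(\tilde{\boldsymbol\lambda})\sqrt{2^{N_{\rm q}}-1}\Big]^{N-1},$$ which describes the scaling of the error ratio as $b(\tilde{\boldsymbol\lambda})\to 0$.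
   Context: An $N$-th order permutation filter with zeros $0,\beta_1,\dots,\beta_{N-1}$ maps $\rho$ to $\rho\prod_{n=1}^{N-1}(\rho-\beta_nI)$; the choice $\boldsymbol\beta=\mathbf 0$ corresponds to $N$-th order virtual distillation ($\rho\mapsto\rho^N$). The expectation $\mathbb{E}$ is taken over the spectral distribution of the nondominant eigenvalues $\lambda_2,\dots,\lambda_{2^{N_{\rm q}}}$ of $\rho$, each with equal weight. *)

theory Defs
  imports "HOL-Analysis.Analysis" "Jordan_Normal_Form.Schur_Decomposition"
begin

definition mtrace :: "complex mat \<Rightarrow> complex" where
  "mtrace A = (\<Sum>i<dim_row A. A $$ (i, i))"

definition density_matrix :: "nat \<Rightarrow> complex mat \<Rightarrow> bool" where
  "density_matrix d \<rho> \<longleftrightarrow> \<rho> \<in> carrier_mat d d \<and> mat_adjoint \<rho> = \<rho> \<and>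
     (\<forall>v \<in> carrier_vec d. 0 \<le> Re (conjugate v \<bullet> (\<rho> *\<^sub>v v))) \<and> mtrace \<rho> = 1"

definition Exp_nd :: "nat \<Rightarrow> (nat \<Rightarrow> real) \<Rightarrow> (real \<Rightarrow> real) \<Rightarrow> real" where
  "Exp_nd Nq lam g = (1 / (2 ^ Nq - 1)) * (\<Sum>i = 2..2 ^ Nq. g (lam i))"

definition mu_nd :: "nat \<Rightarrow> (nat \<Rightarrow> real) \<Rightarrow> real" where
  "mu_nd Nq lam = Exp_nd Nq lam (\<lambda>x. x)"

definition bandwidth :: "nat \<Rightarrow> (nat \<Rightarrow> real) \<Rightarrow> real" where
  "bandwidth Nq lam = (1 / mu_nd Nq lam) * sqrt (Exp_nd Nq lam (\<lambda>x. \<bar>x - mu_nd Nq lam\<bar> ^ 2))"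

definition eps_tilde :: "nat \<Rightarrow> nat \<Rightarrow> (nat \<Rightarrow> real) \<Rightarrow> (nat \<Rightarrow> real) \<Rightarrow> real" where
  "eps_tilde Nq N lam \<beta> = Exp_nd Nq lam (\<lambda>x. \<bar>x * (\<Prod>n = 1..N - 1. (x - \<beta> n))\<bar>)"

definition error_ratio :: "nat \<Rightarrow> nat \<Rightarrow> (nat \<Rightarrow> real) \<Rightarrow> (nat \<Rightarrow> real) \<Rightarrow> real" where
  "error_ratio Nq N lam \<beta> = eps_tilde Nq N lam \<beta> / eps_tilde Nq N lam (\<lambda>_. 0)"

end

theory Submission
  imports Defs
begin

lemma tangent_pow:
  fixes x m :: real and n :: nat
  assumes "x \<ge> 0" "m > 0"
  shows "m ^ n + real n * m ^ (n - 1) * (x - m) \<le> x ^ n"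
proof (cases n)
  case 0 then show ?thesis by simp
next
  case (Suc k)
  have t: "-1 \<le> x / m - 1" using assms by (simp add: field_simps)
  have "1 + real n * (x/m - 1) \<le> (1 + (x/m - 1)) ^ n" by (rule Bernoulli_inequality[OF t])
  then have "1 + real n * (x/m - 1) \<le> (x/m) ^ n" by simp
  then have "m ^ n * (1 + real n * (x/m - 1)) \<le> m ^ n * (x/m) ^ n"
    using assms by (intro mult_left_mono) auto
  also have "m ^ n * (x/m) ^ n = x ^ n" using assms by (simp add: power_divide)
  also have "m ^ n * (1 + real n * (x/m - 1)) = m ^ n + real n * m ^ (n - 1) * (x - m)"
    using assms Suc by (simp add: field_simps)
  finally show ?thesis .
qed

lemma main_real:
  fixes I :: "nat set" and x :: "nat \<Rightarrow> real" and K :: nat and M mu :: real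
  assumes fin: "finite I" and M: "M = real (card I)" and Mpos: "M \<ge> 1"
    and nn: "\<And>i. i \<in> I \<Longrightarrow> 0 \<le> x i"
    and s1: "(\<Sum>i\<in>I. x i) \<le> 1"
    and mu: "mu = (1 / M) * (\<Sum>i\<in>I. x i)" and mupos: "mu > 0"
    and K: "K \<ge> 1"
  shows "((1 / M) * (\<Sum>i\<in>I. \<bar>x i * (x i - mu) ^ K\<bar>)) / ((1 / M) * (\<Sum>i\<in>I. \<bar>x i * x i ^ K\<bar>))
     \<le> (1 / mu) * ((1 / mu) * sqrt ((1 / M) * (\<Sum>i\<in>I. \<bar>x i - mu\<bar> ^ 2)) * sqrt M) ^ K"
proof -
  define Q where "Q = (\<Sum>i\<in>I. (x i - mu) ^ 2)"
  define S where "S = sqrt Q"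
  define T where "T = (\<Sum>i\<in>I. x i * \<bar>x i - mu\<bar> ^ K)"
  define P where "P = (\<Sum>i\<in>I. x i ^ (K + 1))"
  have Q0: "Q \<ge> 0" unfolding Q_def by (intro sum_nonneg) auto
  have S0: "S \<ge> 0" unfolding S_def using Q0 by simp
  have sumx: "(\<Sum>i\<in>I. x i) = M * mu" using mu Mpos by simp
  have mu1: "mu \<le> 1"
  proof -
    have "M * mu \<le> 1" using sumx s1 by simp
    moreover have "mu \<le> M * mu" using Mpos mupos by (simp add: mult_le_cancel_right1)
    ultimately show ?thesis by simp
  qed
  have dev: "\<bar>x i - mu\<bar> \<le> S" if "i \<in> I" for i
  proof -
    have "(x i - mu) ^ 2 \<le> Q" unfolding Q_def
      using that fin by (intro member_le_sum) auto
    then have "sqrt ((x i - mu) ^ 2) \<le> S" unfolding S_def by (rule real_sqrt_le_mono)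
    then show ?thesis by simp
  qed
  have T_le: "T \<le> S ^ K * (M * mu)"
  proof -
    have "T \<le> (\<Sum>i\<in>I. x i * S ^ K)" unfolding T_def
      using nn dev by (intro sum_mono mult_left_mono power_mono) auto
    also have "\<dots> = S ^ K * (M * mu)" using sumx by (simp add: sum_distrib_right[symmetric] mult.commute)
    finally show ?thesis .
  qed
  have P_ge: "P \<ge> M * mu ^ (K + 1)"
  proof -
    have "(\<Sum>i\<in>I. mu ^ (K+1) + real (K+1) * mu ^ K * (x i - mu)) \<le> P"
      unfolding P_def using tangent_pow[OF nn mupos, of _ "K+1"] by (intro sum_mono) auto
    moreover have "(\<Sum>i\<in>I. mu ^ (K+1) + real (K+1) * mu ^ K * (x i - mu))
       = M * mu ^ (K+1) + real (K+1) * mu ^ K * ((\<Sum>i\<in>I. x i) - M * mu)"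
      using M by (simp add: sum.distrib sum_distrib_left[symmetric] sum_subtractf)
    ultimately show ?thesis using sumx by simp
  qed
  have Ppos: "P > 0" using P_ge Mpos mupos
    by (smt (verit) mult_pos_pos zero_less_power)
  have LHS: "((1 / M) * (\<Sum>i\<in>I. \<bar>x i * (x i - mu) ^ K\<bar>)) / ((1 / M) * (\<Sum>i\<in>I. \<bar>x i * x i ^ K\<bar>)) = T / P"
  proof -
    have a: "(\<Sum>i\<in>I. \<bar>x i * (x i - mu) ^ K\<bar>) = T" unfolding T_def
      using nn by (intro sum.cong) (auto simp: abs_mult power_abs)
    have b: "(\<Sum>i\<in>I. \<bar>x i * x i ^ K\<bar>) = P" unfolding P_def
      using nn by (intro sum.cong) (auto simp: abs_mult power_abs)
    show ?thesis using Mpos by (simp add: a b)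
  qed
  have RHS: "(1 / mu) * ((1 / mu) * sqrt ((1 / M) * (\<Sum>i\<in>I. \<bar>x i - mu\<bar> ^ 2)) * sqrt M) ^ K
      = S ^ K / mu ^ (K + 1)"
  proof -
    have "sqrt ((1 / M) * (\<Sum>i\<in>I. \<bar>x i - mu\<bar> ^ 2)) * sqrt M = S"
      unfolding S_def Q_def using Mpos by (simp add: real_sqrt_mult[symmetric])
    then show ?thesis by (simp add: power_divide field_simps)
  qed
  have "T / P \<le> S ^ K * (M * mu) / (M * mu ^ (K + 1))"
    using T_le P_ge Ppos Mpos mupos S0
    by (intro frac_le) auto
  also have "\<dots> = S ^ K / mu ^ K" using Mpos mupos by (simp add: field_simps)
  also have "\<dots> \<le> S ^ K / mu ^ (K + 1)"
  proof (intro divide_left_mono)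
    show "mu ^ (K + 1) \<le> mu ^ K" using mu1 mupos by (simp add: mult_le_cancel_right1)
  qed (use S0 mupos in auto)
  finally show ?thesis using LHS RHS by simp
qed
lemma coeff_prod_linear:
  fixes a :: "'b \<Rightarrow> 'a :: comm_ring_1"
  assumes "finite S"
  shows "(\<forall>k>card S. coeff (\<Prod>i\<in>S. [:- a i, 1:]) k = 0) \<and> coeff (\<Prod>i\<in>S. [:- a i, 1:]) (card S) = 1
    \<and> (if card S = 0 then 0 else coeff (\<Prod>i\<in>S. [:- a i, 1:]) (card S - 1)) = - (\<Sum>i\<in>S. a i)"
  using assms
proof (induction S rule: finite_induct)
  case empty
  then show ?case by simp
next
  case (insert x S)
  define P where "P = (\<Prod>i\<in>S. [:- a i, 1:])"
  have eq: "(\<Prod>i\<in>insert x S. [:- a i, 1:]) = pCons 0 P - Polynomial.smult (a x) P"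
    using insert unfolding P_def by (simp add: algebra_simps)
  have c: "card (insert x S) = Suc (card S)" using insert by simp
  have IH: "\<forall>k>card S. coeff P k = 0" "coeff P (card S) = 1"
    "(if card S = 0 then 0 else coeff P (card S - 1)) = - (\<Sum>i\<in>S. a i)"
    using insert.IH unfolding P_def by auto
  have A: "\<forall>k>Suc (card S). coeff (pCons 0 P - Polynomial.smult (a x) P) k = 0"
  proof (intro allI impI)
    fix k assume k: "k > Suc (card S)"
    then obtain j where j: "k = Suc j" "j > card S" by (cases k) auto
    show "coeff (pCons 0 P - Polynomial.smult (a x) P) k = 0" using IH(1) j k by simp
  qed
  have B: "coeff (pCons 0 P - Polynomial.smult (a x) P) (Suc (card S)) = 1"
    using IH by simp
  have C: "coeff (pCons 0 P - Polynomial.smult (a x) P) (card S) = - (\<Sum>i\<in>insert x S. a i)"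
  proof (cases "card S")
    case 0
    then show ?thesis using IH insert by simp
  next
    case (Suc m)
    then show ?thesis using IH insert by simp
  qed
  show ?case unfolding eq c using A B C by simp
qed

lemma coeff_prod_linear_sum:
  fixes a :: "'b \<Rightarrow> 'a :: comm_ring_1"
  assumes "finite S" "card S \<ge> 1"
  shows "coeff (\<Prod>i\<in>S. [:- a i, 1:]) (card S - 1) = - (\<Sum>i\<in>S. a i)"
  using coeff_prod_linear[OF assms(1), of a] assms(2) by (simp split: if_splits)

lemma mtrace_comm:
  assumes A: "A \<in> carrier_mat n m" and B: "B \<in> carrier_mat m n"
  shows "mtrace (A * B) = mtrace (B * A)"
proof -
  have "mtrace (A * B) = (\<Sum>i<n. \<Sum>k<m. A $$ (i,k) * B $$ (k,i))"
    unfolding mtrace_def using A B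
    by (intro sum.cong) (auto simp: scalar_prod_def atLeast0LessThan)
  also have "\<dots> = (\<Sum>k<m. \<Sum>i<n. B $$ (k,i) * A $$ (i,k))"
    by (subst sum.swap) (simp add: mult.commute)
  also have "\<dots> = mtrace (B * A)"
    unfolding mtrace_def using A B
    by (intro sum.cong) (auto simp: scalar_prod_def atLeast0LessThan)
  finally show ?thesis .
qed

lemma mtrace_similar:
  assumes "similar_mat A B"
  shows "mtrace A = mtrace B"
proof -
  obtain n P Q where *: "{A,B,P,Q} \<subseteq> carrier_mat n n" "P * Q = 1\<^sub>m n" "Q * P = 1\<^sub>m n" "A = P * B * Q"
    using similar_matD[OF assms] by blast
  have "mtrace A = mtrace ((P * B) * Q)" using * by simp
  also have "\<dots> = mtrace (Q * (P * B))" using * by (intro mtrace_comm[of _ n n]) auto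
  also have "Q * (P * B) = (Q * P) * B" using * by (simp add: assoc_mult_mat[symmetric, of Q n n P n B n])
  also have "\<dots> = B"
  proof -
    have Bc: "B \<in> carrier_mat n n" using *(1) by auto
    show ?thesis unfolding *(3) by (rule left_mult_one_mat[OF Bc])
  qed
  finally show ?thesis .
qed

lemma sum_eigs:
  fixes \<rho> :: "complex mat" and lam :: "nat \<Rightarrow> real"
  assumes n: "n \<ge> 1" and rho: "density_matrix n \<rho>"
    and cp: "char_poly \<rho> = (\<Prod>i = 1..n. [:- complex_of_real (lam i), 1:])"
  shows "(\<Sum>i = 1..n. lam i) = 1"
proof -
  have car: "\<rho> \<in> carrier_mat n n" and tr: "mtrace \<rho> = 1" using rho unfolding density_matrix_def by auto
  have lst: "char_poly \<rho> = (\<Prod>a \<leftarrow> map (\<lambda>i. complex_of_real (lam i)) [1..<Suc n]. [:- a, 1:])"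
  proof -
    have "(\<Prod>i = 1..n. [:- complex_of_real (lam i), 1:]) = prod_list (map (\<lambda>i. [:- complex_of_real (lam i), 1:]) [1..<Suc n])"
    proof -
      have e: "{1..n} = set [1..<Suc n]" by auto
      show ?thesis unfolding e by (rule prod.distinct_set_conv_list[OF distinct_upt])
    qed
    then show ?thesis unfolding cp by (simp add: o_def)
  qed
  obtain B where B: "B \<in> carrier_mat n n" "upper_triangular B" "similar_mat \<rho> B"
    using schur_decomposition_exists[OF car lst] by blast
  have "char_poly B = (\<Prod> a \<leftarrow> diag_mat B. [:- a, 1:])"
    by (rule char_poly_upper_triangular[OF B(1) B(2)])
  also have "\<dots> = (\<Prod>i<n. [:- B $$ (i,i), 1:])"
    using B(1) unfolding diag_mat_def
    by (simp add: prod.distinct_set_conv_list[symmetric] atLeast0LessThan)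
  finally have cB: "char_poly B = (\<Prod>i<n. [:- B $$ (i,i), 1:])" .
  have "char_poly \<rho> = char_poly B" by (rule char_poly_similar[OF B(3)])
  then have eqp: "(\<Prod>i<n. [:- B $$ (i,i), 1:]) = (\<Prod>i = 1..n. [:- complex_of_real (lam i), 1:])"
    using cB cp by simp
  have "- (\<Sum>i<n. B $$ (i,i)) = - (\<Sum>i = 1..n. complex_of_real (lam i))"
    using coeff_prod_linear_sum[of "{..<n}" "\<lambda>i. B $$ (i,i)"]
      coeff_prod_linear_sum[of "{1..n}" "\<lambda>i. complex_of_real (lam i)"] n eqp by simp
  moreover have "mtrace B = (\<Sum>i<n. B $$ (i,i))" using B(1) unfolding mtrace_def by simp
  moreover have "mtrace B = 1" using mtrace_similar[OF B(3)] tr by simp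
  ultimately have "(\<Sum>i = 1..n. complex_of_real (lam i)) = 1" by simp
  then have "complex_of_real (\<Sum>i = 1..n. lam i) = 1" by (simp only: of_real_sum)
  then show ?thesis using of_real_eq_1_iff by blast
qed

theorem proposition2:
  fixes Nq N :: nat and \<rho> :: "complex mat" and lam :: "nat \<Rightarrow> real"
  assumes "Nq \<ge> 1" and "N \<ge> 2"
    and "density_matrix (2 ^ Nq) \<rho>"
    and "char_poly \<rho> = (\<Prod>i = 1..2 ^ Nq. [:- complex_of_real (lam i), 1:])"
    and "\<And>i j. 1 \<le> i \<Longrightarrow> i \<le> j \<Longrightarrow> j \<le> 2 ^ Nq \<Longrightarrow> lam j \<le> lam i"
    and "\<And>i. 1 \<le> i \<Longrightarrow> i \<le> 2 ^ Nq \<Longrightarrow> 0 \<le> lam i"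
    and "mu_nd Nq lam > 0"
  shows "error_ratio Nq N lam (\<lambda>_. mu_nd Nq lam)
           \<le> (1 / mu_nd Nq lam) * (bandwidth Nq lam * sqrt (2 ^ Nq - 1)) ^ (N - 1)"
proof -
  define n where "n = (2::nat) ^ Nq"
  have n2: "n \<ge> 2" unfolding n_def using assms(1)
    by (metis One_nat_def le_add1 numeral_le_iff one_le_numeral plus_1_eq_Suc power_increasing power_one_right semiring_norm(69))
  have s: "(\<Sum>i = 1..n. lam i) = 1" using sum_eigs[of n \<rho> lam] n2 assms(3,4) unfolding n_def by simp
  have split: "(\<Sum>i = 1..n. lam i) = lam 1 + (\<Sum>i = 2..n. lam i)"
    using n2 by (simp add: sum.atLeast_Suc_atMost numeral_2_eq_2)
  have l1: "lam 1 \<ge> 0" using assms(6)[of 1] n2 unfolding n_def by simp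
  have s1: "(\<Sum>i = 2..n. lam i) \<le> 1" using s split l1 by simp
  have Meq: "(2::real) ^ Nq - 1 = real (card {2..n})" unfolding n_def
    by (simp add: of_nat_diff)
  have M1: "real (card {2..n}) \<ge> 1" using n2 by simp
  define mu where "mu = mu_nd Nq lam"
  have mu: "mu = (1 / real (card {2..n})) * (\<Sum>i\<in>{2..n}. lam i)"
    unfolding mu_def mu_nd_def Exp_nd_def Meq n_def by simp
  have nn: "\<And>i. i \<in> {2..n} \<Longrightarrow> 0 \<le> lam i" using assms(6) unfolding n_def by auto
  have K: "N - 1 \<ge> 1" using assms(2) by simp
  have main: "((1 / real (card {2..n})) * (\<Sum>i\<in>{2..n}. \<bar>lam i * (lam i - mu) ^ (N-1)\<bar>)) /
       ((1 / real (card {2..n})) * (\<Sum>i\<in>{2..n}. \<bar>lam i * lam i ^ (N-1)\<bar>))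
     \<le> (1 / mu) * ((1 / mu) * sqrt ((1 / real (card {2..n})) * (\<Sum>i\<in>{2..n}. \<bar>lam i - mu\<bar> ^ 2)) * sqrt (real (card {2..n}))) ^ (N-1)"
    by (rule main_real[OF _ refl M1 nn s1 mu _ K]) (use assms(7) mu_def in auto)
  show ?thesis
    using main unfolding error_ratio_def eps_tilde_def bandwidth_def Exp_nd_def mu_def[symmetric]
    by (simp add: Meq n_def[symmetric])
qed

end
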